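(* Let $k\ge 0$. If $V$ is a point configuration with $\mathrm{Th}(V)\le k$ and $H$ is a supporting hyperplane of $V$, then $\mathrm{Th}(V\cap H)\le k$. Likewise, if $\mathrm{Lev}(V)\le k$ then $\mathrm{Lev}(V\cap H)\le k$.
   Context: A point configuration is a finite set $V\subset\mathbb{R}^n$. A linear function means an affine function $\ell(x)=\delta-\langle c,x\rangle$. A supporting hyperplane of $V$ is a hyperplane $H=\{x:g(x)=0\}$ with $g$ a linear function nonnegative on $V$. A linear function $\ell$ nonnegative on $V$ is $k$-sos with respect to $V$ if there are polynomials $h_1,\dots,h_s$ with $\deg h_i\le k$ and $\ell(v)=\sum_i h_i(v)^2$ for all $v\in V$. The Theta rank $\mathrm{Th}(V)$ is the smallest $k\ge0$ such that every linear function nonnegative on $V$ is $k$-sos with respect to $V$. For $\ell$ nonnegative on $V$, $\{v\in V:\ell(v)=0\}$ is a face of $V$; inclusion-maximal faces different from $V$ are facets and the corresponding $\ell$ facet-defining. $V$ is $k$-level if every facet-defining linear function takes at most $k$ distinct values on $V$; the levelness $\mathrm{Lev}(V)$ is the smallest such $k$. *)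

theory Defs
  imports "HOL-Analysis.Analysis"
begin

definition monomial_fun :: "('n::finite \<Rightarrow> nat) \<Rightarrow> real^'n \<Rightarrow> real" where
  "monomial_fun \<alpha> x = (\<Prod>i\<in>UNIV. (x $ i) ^ (\<alpha> i))"

definition poly_fun_deg_le :: "nat \<Rightarrow> (real^'n::finite \<Rightarrow> real) \<Rightarrow> bool" where
  "poly_fun_deg_le k h \<longleftrightarrow>
     (\<exists>coef :: ('n \<Rightarrow> nat) \<Rightarrow> real.
        finite {\<alpha>. coef \<alpha> \<noteq> 0} \<and>
        (\<forall>\<alpha>. coef \<alpha> \<noteq> 0 \<longrightarrow> (\<Sum>i\<in>UNIV. \<alpha> i) \<le> k) \<and>
        h = (\<lambda>x. \<Sum>\<alpha>\<in>{\<alpha>. coef \<alpha> \<noteq> 0}. coef \<alpha> * monomial_fun \<alpha> x))"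

definition lin_fun :: "real \<Rightarrow> real^'n::finite \<Rightarrow> real^'n \<Rightarrow> real" where
  "lin_fun \<delta> c x = \<delta> - c \<bullet> x"

definition nonneg_on :: "(real^'n::finite) set \<Rightarrow> (real^'n \<Rightarrow> real) \<Rightarrow> bool" where
  "nonneg_on V l \<longleftrightarrow> (\<forall>v\<in>V. 0 \<le> l v)"

definition k_sos :: "nat \<Rightarrow> (real^'n::finite) set \<Rightarrow> (real^'n \<Rightarrow> real) \<Rightarrow> bool" where
  "k_sos k V l \<longleftrightarrow>
     (\<exists>hs :: (real^'n \<Rightarrow> real) list.
        (\<forall>h\<in>set hs. poly_fun_deg_le k h) \<and>
        (\<forall>v\<in>V. l v = (\<Sum>h\<leftarrow>hs. (h v)\<^sup>2)))"

definition theta_rank :: "(real^'n::finite) set \<Rightarrow> nat" where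
  "theta_rank V = (LEAST k. \<forall>\<delta> c. nonneg_on V (lin_fun \<delta> c) \<longrightarrow> k_sos k V (lin_fun \<delta> c))"

definition face_of_config :: "(real^'n::finite) set \<Rightarrow> (real^'n) set \<Rightarrow> bool" where
  "face_of_config V F \<longleftrightarrow>
     (\<exists>\<delta> c. nonneg_on V (lin_fun \<delta> c) \<and> F = {v\<in>V. lin_fun \<delta> c v = 0})"

definition facet_of_config :: "(real^'n::finite) set \<Rightarrow> (real^'n) set \<Rightarrow> bool" where
  "facet_of_config V F \<longleftrightarrow>
     face_of_config V F \<and> F \<noteq> V \<and>
     (\<forall>G. face_of_config V G \<and> G \<noteq> V \<and> F \<subseteq> G \<longrightarrow> G = F)"

definition facet_defining :: "(real^'n::finite) set \<Rightarrow> real \<Rightarrow> real^'n \<Rightarrow> bool" where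
  "facet_defining V \<delta> c \<longleftrightarrow>
     nonneg_on V (lin_fun \<delta> c) \<and> facet_of_config V {v\<in>V. lin_fun \<delta> c v = 0}"

definition k_level :: "nat \<Rightarrow> (real^'n::finite) set \<Rightarrow> bool" where
  "k_level k V \<longleftrightarrow>
     (\<forall>\<delta> c. facet_defining V \<delta> c \<longrightarrow> card (lin_fun \<delta> c ` V) \<le> k)"

definition levelness :: "(real^'n::finite) set \<Rightarrow> nat" where
  "levelness V = (LEAST k. k_level k V)"

end

theory Submission
  imports Defs
begin

lemma poly_alt:
  assumes "finite S" "\<forall>\<alpha>\<in>S. (\<Sum>i\<in>UNIV. \<alpha> i) \<le> k"
  shows "poly_fun_deg_le k (\<lambda>x. \<Sum>\<alpha>\<in>S. d \<alpha> * monomial_fun \<alpha> x)"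
proof -
  define coef where "coef \<alpha> = (if \<alpha> \<in> S then d \<alpha> else 0)" for \<alpha>
  have sub: "{\<alpha>. coef \<alpha> \<noteq> 0} \<subseteq> S" by (auto simp: coef_def split: if_splits)
  have fin: "finite {\<alpha>. coef \<alpha> \<noteq> 0}" using sub assms(1) finite_subset by blast
  have eq: "(\<Sum>\<alpha>\<in>S. d \<alpha> * monomial_fun \<alpha> x) = (\<Sum>\<alpha>\<in>{\<alpha>. coef \<alpha> \<noteq> 0}. coef \<alpha> * monomial_fun \<alpha> x)" for x
    by (rule sum.mono_neutral_cong_right[OF assms(1) sub]) (auto simp: coef_def)
  show ?thesis unfolding poly_fun_deg_le_def
    by (rule exI[of _ coef]) (use fin sub assms(2) eq in auto)
qed

lemma poly_rep:
  assumes "poly_fun_deg_le k h"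
  shows "\<exists>S d. finite S \<and> (\<forall>\<alpha>\<in>S. (\<Sum>i\<in>UNIV. \<alpha> i) \<le> k) \<and> h = (\<lambda>x. \<Sum>\<alpha>\<in>S. d \<alpha> * monomial_fun \<alpha> x)"
  using assms unfolding poly_fun_deg_le_def by blast

lemma poly_mono:
  assumes "k \<le> k'" "poly_fun_deg_le k h"
  shows "poly_fun_deg_le k' h"
proof -
  obtain coef where c: "finite {\<alpha>. coef \<alpha> \<noteq> 0}" "\<forall>\<alpha>. coef \<alpha> \<noteq> 0 \<longrightarrow> (\<Sum>i\<in>UNIV. \<alpha> i) \<le> k"
    "h = (\<lambda>x. \<Sum>\<alpha>\<in>{\<alpha>. coef \<alpha> \<noteq> 0}. coef \<alpha> * monomial_fun \<alpha> x)"
    using assms(2) unfolding poly_fun_deg_le_def by blast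
  have "\<forall>\<alpha>. coef \<alpha> \<noteq> 0 \<longrightarrow> (\<Sum>i\<in>UNIV. \<alpha> i) \<le> k'" using c(2) assms(1) by auto
  then show ?thesis unfolding poly_fun_deg_le_def using c(1,3) by blast
qed

lemma poly_zero: "poly_fun_deg_le k (\<lambda>x. 0)"
  unfolding poly_fun_deg_le_def by (rule exI[of _ "\<lambda>_. 0"]) simp

lemma poly_add:
  assumes "poly_fun_deg_le k f" "poly_fun_deg_le k g"
  shows "poly_fun_deg_le k (\<lambda>x. f x + g x)"
proof -
  obtain Sf df where f: "finite Sf" "\<forall>\<alpha>\<in>Sf. (\<Sum>i\<in>UNIV. \<alpha> i) \<le> k" "f = (\<lambda>x. \<Sum>\<alpha>\<in>Sf. df \<alpha> * monomial_fun \<alpha> x)"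
    using poly_rep[OF assms(1)] by blast
  obtain Sg dg where g: "finite Sg" "\<forall>\<alpha>\<in>Sg. (\<Sum>i\<in>UNIV. \<alpha> i) \<le> k" "g = (\<lambda>x. \<Sum>\<alpha>\<in>Sg. dg \<alpha> * monomial_fun \<alpha> x)"
    using poly_rep[OF assms(2)] by blast
  define d where "d \<alpha> = (if \<alpha> \<in> Sf then df \<alpha> else 0) + (if \<alpha> \<in> Sg then dg \<alpha> else 0)" for \<alpha>
  have e1: "(\<Sum>\<alpha>\<in>Sf \<union> Sg. (if \<alpha> \<in> Sf then df \<alpha> else 0) * monomial_fun \<alpha> x) = (\<Sum>\<alpha>\<in>Sf. df \<alpha> * monomial_fun \<alpha> x)" for x
    by (rule sum.mono_neutral_cong_right) (use f g in auto)
  have e2: "(\<Sum>\<alpha>\<in>Sf \<union> Sg. (if \<alpha> \<in> Sg then dg \<alpha> else 0) * monomial_fun \<alpha> x) = (\<Sum>\<alpha>\<in>Sg. dg \<alpha> * monomial_fun \<alpha> x)" for x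
    by (rule sum.mono_neutral_cong_right) (use f g in auto)
  have "(\<lambda>x. f x + g x) = (\<lambda>x. \<Sum>\<alpha>\<in>Sf \<union> Sg. d \<alpha> * monomial_fun \<alpha> x)"
    by (auto simp: f(3) g(3) d_def distrib_right sum.distrib e1 e2)
  moreover have "poly_fun_deg_le k (\<lambda>x. \<Sum>\<alpha>\<in>Sf \<union> Sg. d \<alpha> * monomial_fun \<alpha> x)"
    by (rule poly_alt) (use f g in auto)
  ultimately show ?thesis by simp
qed

lemma poly_sum:
  assumes "finite I" "\<forall>i\<in>I. poly_fun_deg_le k (f i)"
  shows "poly_fun_deg_le k (\<lambda>x. \<Sum>i\<in>I. f i x)"
  using assms
proof (induction I rule: finite_induct)
  case empty then show ?case by (simp add: poly_zero)
next
  case (insert a F)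
  have h1: "poly_fun_deg_le k (f a)" using insert.prems by simp
  have h2: "poly_fun_deg_le k (\<lambda>x. \<Sum>i\<in>F. f i x)" using insert.IH insert.prems by simp
  have "poly_fun_deg_le k (\<lambda>x. f a x + (\<Sum>i\<in>F. f i x))" by (rule poly_add[OF h1 h2])
  then show ?case using insert.hyps by simp
qed

lemma poly_scale:
  assumes "poly_fun_deg_le k f"
  shows "poly_fun_deg_le k (\<lambda>x. a * f x)"
proof -
  obtain S d where f: "finite S" "\<forall>\<alpha>\<in>S. (\<Sum>i\<in>UNIV. \<alpha> i) \<le> k" "f = (\<lambda>x. \<Sum>\<alpha>\<in>S. d \<alpha> * monomial_fun \<alpha> x)"
    using poly_rep[OF assms] by blast
  have "(\<lambda>x. a * f x) = (\<lambda>x. \<Sum>\<alpha>\<in>S. (a * d \<alpha>) * monomial_fun \<alpha> x)"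
    by (simp add: f(3) sum_distrib_left mult.assoc)
  then show ?thesis using poly_alt[OF f(1,2)] by simp
qed

lemma mono_add: "monomial_fun (\<lambda>i. \<alpha> i + \<beta> i) x = monomial_fun \<alpha> x * monomial_fun \<beta> x"
  unfolding monomial_fun_def by (simp add: power_add prod.distrib)

lemma poly_term:
  assumes "(\<Sum>i\<in>UNIV. \<gamma> i) \<le> k"
  shows "poly_fun_deg_le k (\<lambda>x. c * monomial_fun \<gamma> x)"
  using poly_alt[of "{\<gamma>}" k "\<lambda>_. c"] assms by simp

lemma poly_mult:
  assumes "poly_fun_deg_le a f" "poly_fun_deg_le b g"
  shows "poly_fun_deg_le (a + b) (\<lambda>x. f x * g x)"
proof -
  obtain Sf df where f: "finite Sf" "\<forall>\<alpha>\<in>Sf. (\<Sum>i\<in>UNIV. \<alpha> i) \<le> a" "f = (\<lambda>x. \<Sum>\<alpha>\<in>Sf. df \<alpha> * monomial_fun \<alpha> x)"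
    using poly_rep[OF assms(1)] by blast
  obtain Sg dg where g: "finite Sg" "\<forall>\<alpha>\<in>Sg. (\<Sum>i\<in>UNIV. \<alpha> i) \<le> b" "g = (\<lambda>x. \<Sum>\<alpha>\<in>Sg. dg \<alpha> * monomial_fun \<alpha> x)"
    using poly_rep[OF assms(2)] by blast
  have eq: "(\<lambda>x. f x * g x) = (\<lambda>x. \<Sum>\<alpha>\<in>Sf. \<Sum>\<beta>\<in>Sg. (df \<alpha> * dg \<beta>) * monomial_fun (\<lambda>i. \<alpha> i + \<beta> i) x)"
    by (auto simp: f(3) g(3) sum_product mono_add mult_ac intro!: sum.cong)
  have "poly_fun_deg_le (a+b) (\<lambda>x. \<Sum>\<alpha>\<in>Sf. \<Sum>\<beta>\<in>Sg. (df \<alpha> * dg \<beta>) * monomial_fun (\<lambda>i. \<alpha> i + \<beta> i) x)"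
  proof (rule poly_sum[OF f(1)], rule ballI)
    fix \<alpha> assume "\<alpha> \<in> Sf"
    show "poly_fun_deg_le (a+b) (\<lambda>x. \<Sum>\<beta>\<in>Sg. (df \<alpha> * dg \<beta>) * monomial_fun (\<lambda>i. \<alpha> i + \<beta> i) x)"
    proof (rule poly_sum[OF g(1)], rule ballI)
      fix \<beta> assume "\<beta> \<in> Sg"
      have "(\<Sum>i\<in>UNIV. \<alpha> i + \<beta> i) \<le> a + b"
        using f(2) g(2) \<open>\<alpha> \<in> Sf\<close> \<open>\<beta> \<in> Sg\<close> by (simp add: sum.distrib add_mono)
      then show "poly_fun_deg_le (a+b) (\<lambda>x. (df \<alpha> * dg \<beta>) * monomial_fun (\<lambda>i. \<alpha> i + \<beta> i) x)"
        by (rule poly_term)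
    qed
  qed
  then show ?thesis using eq by simp
qed

lemma poly_const: "poly_fun_deg_le k (\<lambda>x. a)"
proof -
  have "poly_fun_deg_le k (\<lambda>x. a * monomial_fun (\<lambda>_. 0) x)" by (rule poly_term) simp
  then show ?thesis by (simp add: monomial_fun_def)
qed

lemma poly_coord: "poly_fun_deg_le 1 (\<lambda>x. x $ i)"
proof -
  have "poly_fun_deg_le 1 (\<lambda>x. 1 * monomial_fun (\<lambda>j. if j = i then 1 else 0) x)" by (rule poly_term) simp
  moreover have "monomial_fun (\<lambda>j. if j = i then 1 else 0) x = x $ i" for x :: "real^'a"
  proof -
    have "monomial_fun (\<lambda>j. if j = i then 1 else 0) x = (\<Prod>j\<in>UNIV. if j = i then x $ j else 1)"
      unfolding monomial_fun_def by (rule prod.cong) auto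
    also have "\<dots> = x $ i" by (simp add: prod.delta)
    finally show ?thesis .
  qed
  ultimately show ?thesis by simp
qed

lemma poly_affine: "poly_fun_deg_le 1 (\<lambda>x::real^'n. a + c \<bullet> x)"
proof -
  have "c \<bullet> x = (\<Sum>i\<in>UNIV. c $ i * x $ i)" for x by (simp add: inner_vec_def)
  moreover have "poly_fun_deg_le 1 (\<lambda>x::real^'n. a + (\<Sum>i\<in>UNIV. c $ i * x $ i))"
    apply (rule poly_add[OF poly_const poly_sum])
     apply simp
    apply (intro ballI)
    apply (rule poly_scale[OF poly_coord])
    done
  ultimately show ?thesis by simp
qed

lemma poly_prod:
  assumes "finite I" "\<forall>i\<in>I. poly_fun_deg_le 1 (f i)"
  shows "poly_fun_deg_le (card I) (\<lambda>x. \<Prod>i\<in>I. f i x)"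
  using assms
proof (induction I rule: finite_induct)
  case empty then show ?case by (simp add: poly_const)
next
  case (insert a F)
  then show ?case using poly_mult[of 1 "f a" "card F" "\<lambda>x. \<Prod>i\<in>F. f i x"] by simp
qed

lemma lin_affine: "lin_fun a c = (\<lambda>x. (a) + (- c) \<bullet> x)"
  by (auto simp: lin_fun_def)

definition ind :: "(real^'n::finite) set \<Rightarrow> real^'n \<Rightarrow> real^'n \<Rightarrow> real" where
  "ind V w x = (\<Prod>u\<in>V - {w}. ((w - u) \<bullet> (x - u)) / ((w - u) \<bullet> (w - u)))"

lemma ind_poly:
  assumes "finite V"
  shows "poly_fun_deg_le (card V) (ind V w)"
proof -
  have f: "poly_fun_deg_le 1 (\<lambda>x. ((w - u) \<bullet> (x - u)) / ((w - u) \<bullet> (w - u)))" for u :: "real^'a"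
  proof -
    have feq: "(\<lambda>x. ((w - u) \<bullet> (x - u)) / ((w - u) \<bullet> (w - u)))
        = (\<lambda>x. (- ((w - u) \<bullet> u) / ((w - u) \<bullet> (w - u))) + ((1 / ((w - u) \<bullet> (w - u))) *\<^sub>R (w - u)) \<bullet> x)"
      by (auto simp: inner_diff_right diff_divide_distrib)
    show ?thesis by (subst feq) (rule poly_affine)
  qed
  have "poly_fun_deg_le (card (V - {w})) (ind V w)"
    unfolding ind_def by (rule poly_prod) (use assms f in auto)
  then show ?thesis by (rule poly_mono[rotated]) (simp add: assms card_mono)
qed

lemma ind_val:
  assumes "finite V" "v \<in> V" "w \<in> V"
  shows "ind V w v = (if v = w then 1 else 0)"
proof (cases "v = w")
  case True
  have "ind V w v = (\<Prod>u\<in>V - {w}. 1)" unfolding ind_def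
    by (rule prod.cong) (auto simp: True)
  then show ?thesis using True by simp
next
  case False
  have "ind V w v = 0" unfolding ind_def
    apply (rule prod_zero)
     apply (simp add: assms)
    apply (rule bexI[of _ v])
    using assms False by auto
  then show ?thesis using False by simp
qed

lemma exists_sos:
  assumes "finite V" "nonneg_on V l"
  shows "k_sos (card V) V l"
proof -
  obtain xs where xs: "set xs = V" "distinct xs" using finite_distinct_list[OF assms(1)] by blast
  define hs where "hs = map (\<lambda>w x. sqrt (l w) * ind V w x) xs"
  have "\<forall>h\<in>set hs. poly_fun_deg_le (card V) h"
  proof
    fix h assume "h \<in> set hs"
    then obtain w where "h = (\<lambda>x. sqrt (l w) * ind V w x)" unfolding hs_def by auto
    then show "poly_fun_deg_le (card V) h" using poly_scale[OF ind_poly[OF assms(1)]] by simp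
  qed
  moreover have "\<forall>v\<in>V. l v = (\<Sum>h\<leftarrow>hs. (h v)\<^sup>2)"
  proof
    fix v assume v: "v \<in> V"
    have "(\<Sum>h\<leftarrow>hs. (h v)\<^sup>2) = (\<Sum>w\<leftarrow>xs. (sqrt (l w) * ind V w v)\<^sup>2)"
      by (simp add: hs_def o_def)
    also have "\<dots> = (\<Sum>w\<in>V. (sqrt (l w) * ind V w v)\<^sup>2)"
      using xs by (simp add: sum_list_distinct_conv_sum_set)
    also have "\<dots> = (\<Sum>w\<in>V. if v = w then l w else 0)"
    proof (rule sum.cong)
      fix w assume w: "w \<in> V"
      have "l w \<ge> 0" using assms(2) w by (auto simp: nonneg_on_def)
      then show "(sqrt (l w) * ind V w v)\<^sup>2 = (if v = w then l w else 0)"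
        using ind_val[OF assms(1) v w] by (simp add: power_mult_distrib)
    qed simp
    also have "\<dots> = l v" using v assms(1) by simp
    finally show "l v = (\<Sum>h\<leftarrow>hs. (h v)\<^sup>2)" by simp
  qed
  ultimately show ?thesis unfolding k_sos_def by (intro exI[of _ hs] conjI)
qed

lemma lin_comb: "lin_fun a c x + M * lin_fun b d x = lin_fun (a + M * b) (c + M *\<^sub>R d) x"
  by (simp add: lin_fun_def inner_add_left algebra_simps)

lemma lin_comb2: "lin_fun a c x - M * lin_fun b d x = lin_fun (a - M * b) (c - M *\<^sub>R d) x"
  by (simp add: lin_fun_def inner_diff_left algebra_simps)

lemma lift_M:
  fixes g l :: "real^'n \<Rightarrow> real"
  assumes "finite V"
  shows "\<exists>M\<ge>0. \<forall>v\<in>V. g v > 0 \<longrightarrow> l v + M * g v > 0"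
proof -
  define P where "P = {v\<in>V. g v > 0}"
  define M where "M = (\<Sum>v\<in>P. (\<bar>l v\<bar> + 1) / g v)"
  have fin: "finite P" using assms by (simp add: P_def)
  have M0: "M \<ge> 0" unfolding M_def P_def by (rule sum_nonneg) auto
  have "l v + M * g v > 0" if v: "v \<in> V" "g v > 0" for v
  proof -
    have vP: "v \<in> P" using v by (simp add: P_def)
    have "(\<bar>l v\<bar> + 1) / g v \<le> M" unfolding M_def
      by (rule member_le_sum[OF vP _ fin]) (auto simp: P_def)
    then have "\<bar>l v\<bar> + 1 \<le> M * g v" using v(2) by (simp add: pos_divide_le_eq)
    then show ?thesis by linarith
  qed
  then show ?thesis using M0 by blast
qed

lemma min_ratio:
  fixes p q :: "'a \<Rightarrow> real"
  assumes "finite A" "A \<noteq> {}"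
  shows "\<exists>a0\<in>A. \<forall>a\<in>A. q a0 / p a0 \<le> q a / p a"
proof -
  define s where "s = Min ((\<lambda>a. q a / p a) ` A)"
  have "s \<in> (\<lambda>a. q a / p a) ` A" unfolding s_def using assms by simp
  then obtain a0 where "a0 \<in> A" "s = q a0 / p a0" by blast
  moreover have "\<forall>a\<in>A. s \<le> q a / p a" unfolding s_def using assms by simp
  ultimately show ?thesis by metis
qed

lemma scaling:
  assumes "finite W" "nonneg_on W (lin_fun a1 c1)" "nonneg_on W (lin_fun a2 c2)"
    and "{w\<in>W. lin_fun a1 c1 w = 0} = F" "{w\<in>W. lin_fun a2 c2 w = 0} = F"
    and "facet_of_config W F"
  shows "\<exists>s>0. \<forall>w\<in>W. lin_fun a2 c2 w = s * lin_fun a1 c1 w"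
proof -
  let ?l1 = "lin_fun a1 c1" and ?l2 = "lin_fun a2 c2"
  have FW: "F \<subseteq> W" "F \<noteq> W" using assms(4,6) unfolding facet_of_config_def by auto
  define A where "A = W - F"
  have A: "finite A" "A \<noteq> {}" using FW assms(1) by (auto simp: A_def)
  have pos1: "?l1 w > 0" if "w \<in> A" for w
    using that assms(2,4) by (force simp: A_def nonneg_on_def)
  have pos2: "?l2 w > 0" if "w \<in> A" for w
    using that assms(3,5) by (force simp: A_def nonneg_on_def)
  obtain a0 where a0: "a0 \<in> A" "\<forall>a\<in>A. ?l2 a0 / ?l1 a0 \<le> ?l2 a / ?l1 a"
    using min_ratio[OF A, of ?l2 ?l1] by blast
  define s where "s = ?l2 a0 / ?l1 a0"
  have s0: "s > 0" unfolding s_def using pos1 pos2 a0(1) by simp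
  define \<phi> where "\<phi> = lin_fun (a2 - s * a1) (c2 - s *\<^sub>R c1)"
  have phi: "\<phi> w = ?l2 w - s * ?l1 w" for w unfolding \<phi>_def by (simp add: lin_comb2)
  have nn: "nonneg_on W \<phi>"
    unfolding nonneg_on_def
  proof
    fix w assume w: "w \<in> W"
    show "0 \<le> \<phi> w"
    proof (cases "w \<in> F")
      case True
      then have "?l1 w = 0" "?l2 w = 0" using assms(4,5) by blast+
      then show ?thesis by (simp add: phi)
    next
      case False
      then have wA: "w \<in> A" using w by (simp add: A_def)
      have "s \<le> ?l2 w / ?l1 w" using a0(2) wA s_def by simp
      then have "s * ?l1 w \<le> ?l2 w" using pos1[OF wA] by (simp add: pos_le_divide_eq)
      then show ?thesis by (simp add: phi)
    qed
  qed
  define G where "G = {w\<in>W. \<phi> w = 0}"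
  have face: "face_of_config W G" unfolding face_of_config_def G_def \<phi>_def using nn \<phi>_def by blast
  have FG: "F \<subseteq> G" using assms(4,5) by (auto simp: G_def phi)
  have a0G: "a0 \<in> G" "a0 \<notin> F" using a0(1) pos1[OF a0(1)] by (auto simp: G_def phi s_def A_def)
  have "G = W"
  proof (rule ccontr)
    assume "G \<noteq> W"
    then have "G = F" using assms(6) face FG unfolding facet_of_config_def by blast
    then show False using a0G by simp
  qed
  then have "\<forall>w\<in>W. \<phi> w = 0" by (auto simp: G_def)
  then show ?thesis using s0 by (auto simp: phi)
qed

theorem lemma2p3:
  fixes V :: "(real^'n) set" and k :: nat and \<delta> :: real and c :: "real^'n"
  assumes "finite V"
    and "c \<noteq> 0"
    and "nonneg_on V (lin_fun \<delta> c)"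
  shows "(theta_rank V \<le> k \<longrightarrow> theta_rank (V \<inter> {x. lin_fun \<delta> c x = 0}) \<le> k)
       \<and> (levelness V \<le> k \<longrightarrow> levelness (V \<inter> {x. lin_fun \<delta> c x = 0}) \<le> k)"
proof -
  define g where "g = lin_fun \<delta> c"
  define W where "W = V \<inter> {x. lin_fun \<delta> c x = 0}"
  have WV: "W \<subseteq> V" by (auto simp: W_def)
  have finW: "finite W" using assms(1) WV finite_subset by blast
  have g0: "\<forall>v\<in>V. g v \<ge> 0" using assms(3) by (simp add: g_def nonneg_on_def)
  have gW: "\<forall>v\<in>V. g v = 0 \<longleftrightarrow> v \<in> W" by (auto simp: W_def g_def)
  have lift: "\<exists>\<delta>2 c2. nonneg_on V (lin_fun \<delta>2 c2) \<and> (\<forall>v\<in>W. lin_fun \<delta>2 c2 v = lin_fun \<delta>' c' v)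
                  \<and> {v\<in>V. lin_fun \<delta>2 c2 v = 0} = {w\<in>W. lin_fun \<delta>' c' w = 0}"
    if nnW: "nonneg_on W (lin_fun \<delta>' c')" for \<delta>' c'
  proof -
    obtain M where M: "M \<ge> 0" "\<forall>v\<in>V. g v > 0 \<longrightarrow> lin_fun \<delta>' c' v + M * g v > 0"
      using lift_M[OF assms(1), of g "lin_fun \<delta>' c'"] by blast
    define \<delta>2 where "\<delta>2 = \<delta>' + M * \<delta>"
    define c2 where "c2 = c' + M *\<^sub>R c"
    have eq: "lin_fun \<delta>2 c2 v = lin_fun \<delta>' c' v + M * g v" for v
      by (simp add: \<delta>2_def c2_def g_def lin_comb)
    have case2: "v \<in> W" if "v \<in> V" "\<not> g v > 0" for v
      using that g0 gW by force
    have "nonneg_on V (lin_fun \<delta>2 c2)"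
      unfolding nonneg_on_def
    proof
      fix v assume v: "v \<in> V"
      show "0 \<le> lin_fun \<delta>2 c2 v"
      proof (cases "g v > 0")
        case True then have "lin_fun \<delta>' c' v + M * g v > 0" using M v by blast
        then show ?thesis using eq[of v] by simp
      next
        case False
        then have "v \<in> W" using case2 v by blast
        then show ?thesis using nnW eq gW v by (auto simp: nonneg_on_def)
      qed
    qed
    moreover have "\<forall>v\<in>W. lin_fun \<delta>2 c2 v = lin_fun \<delta>' c' v" using eq gW WV by auto
    moreover have "{v\<in>V. lin_fun \<delta>2 c2 v = 0} = {w\<in>W. lin_fun \<delta>' c' w = 0}"
    proof (rule set_eqI, rule iffI)
      fix v assume v: "v \<in> {v\<in>V. lin_fun \<delta>2 c2 v = 0}"
      have "\<not> g v > 0" using v M eq by force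
      then have "v \<in> W" using case2 v by blast
      then show "v \<in> {w\<in>W. lin_fun \<delta>' c' w = 0}" using v eq gW by auto
    next
      fix v assume "v \<in> {w\<in>W. lin_fun \<delta>' c' w = 0}"
      then show "v \<in> {v\<in>V. lin_fun \<delta>2 c2 v = 0}" using eq gW WV by auto
    qed
    ultimately show ?thesis by blast
  qed
  have part1: "theta_rank W \<le> theta_rank V"
  proof -
    let ?P = "\<lambda>V k. \<forall>\<delta> c. nonneg_on V (lin_fun \<delta> c) \<longrightarrow> k_sos k V (lin_fun \<delta> c)"
    have ex: "\<exists>k. ?P V k" using exists_sos[OF assms(1)] by blast
    have PV: "?P V (theta_rank V)" unfolding theta_rank_def by (rule LeastI_ex[OF ex])
    have "?P W (theta_rank V)"
    proof (intro allI impI)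
      fix \<delta>' c' assume nnW: "nonneg_on W (lin_fun \<delta>' c')"
      obtain \<delta>2 c2 where L: "nonneg_on V (lin_fun \<delta>2 c2)" "\<forall>v\<in>W. lin_fun \<delta>2 c2 v = lin_fun \<delta>' c' v"
        using lift[OF nnW] by blast
      obtain hs where hs: "\<forall>h\<in>set hs. poly_fun_deg_le (theta_rank V) h"
        "\<forall>v\<in>V. lin_fun \<delta>2 c2 v = (\<Sum>h\<leftarrow>hs. (h v)\<^sup>2)"
        using PV L(1) unfolding k_sos_def by blast
      have "\<forall>v\<in>W. lin_fun \<delta>' c' v = (\<Sum>h\<leftarrow>hs. (h v)\<^sup>2)"
      proof
        fix v assume v: "v \<in> W"
        then have vV: "v \<in> V" using WV by blast
        have e1: "lin_fun \<delta>2 c2 v = lin_fun \<delta>' c' v" using L(2) v by blast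
        have e2: "lin_fun \<delta>2 c2 v = (\<Sum>h\<leftarrow>hs. (h v)\<^sup>2)" using hs(2) vV by blast
        show "lin_fun \<delta>' c' v = (\<Sum>h\<leftarrow>hs. (h v)\<^sup>2)" using e1 e2 by simp
      qed
      then show "k_sos (theta_rank V) W (lin_fun \<delta>' c')"
        unfolding k_sos_def using hs(1) by blast
    qed
    then show ?thesis unfolding theta_rank_def[of W] by (rule Least_le)
  qed
  have part2: "levelness W \<le> levelness V"
  proof -
    have ex: "\<exists>k. k_level k V"
      by (rule exI[of _ "card V"]) (simp add: k_level_def card_image_le assms(1))
    have LV: "k_level (levelness V) V" unfolding levelness_def by (rule LeastI_ex[OF ex])
    have "k_level (levelness V) W"
      unfolding k_level_def
    proof (intro allI impI)
      fix \<delta>' c' assume fd: "facet_defining W \<delta>' c'"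
      define F where "F = {w\<in>W. lin_fun \<delta>' c' w = 0}"
      have nnW: "nonneg_on W (lin_fun \<delta>' c')" and facF: "facet_of_config W F"
        using fd by (auto simp: facet_defining_def F_def)
      have FW: "F \<subseteq> W" "F \<noteq> W" using facF unfolding facet_of_config_def F_def by auto
      define Fam where "Fam = {G. face_of_config V G \<and> G \<inter> W = F}"
      have faceV_sub: "G \<subseteq> V" if "face_of_config V G" for G
        using that unfolding face_of_config_def by auto
      have finFam: "finite Fam"
        by (rule finite_subset[of _ "Pow V"]) (use faceV_sub assms(1) in \<open>auto simp: Fam_def\<close>)
      have "F \<in> Fam"
      proof -
        obtain \<delta>2 c2 where L: "nonneg_on V (lin_fun \<delta>2 c2)"
          "{v\<in>V. lin_fun \<delta>2 c2 v = 0} = F"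
          using lift[OF nnW] F_def by blast
        have "face_of_config V F" unfolding face_of_config_def using L by metis
        then show ?thesis using FW by (auto simp: Fam_def)
      qed
      then obtain G where G: "G \<in> Fam" "\<forall>G'\<in>Fam. G \<subseteq> G' \<longrightarrow> G' = G"
        using finite_has_maximal[OF finFam] by blast
      obtain a2 c2 where a2: "nonneg_on V (lin_fun a2 c2)" "G = {v\<in>V. lin_fun a2 c2 v = 0}"
        using G(1) unfolding Fam_def face_of_config_def by blast
      have GW: "G \<inter> W = F" using G(1) by (simp add: Fam_def)
      have facG: "facet_of_config V G"
        unfolding facet_of_config_def
      proof (intro conjI allI impI)
        show "face_of_config V G" using G(1) by (simp add: Fam_def)
        show "G \<noteq> V" using GW FW WV by auto
        fix G2 assume G2: "face_of_config V G2 \<and> G2 \<noteq> V \<and> G \<subseteq> G2"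
        obtain a3 c3 where a3: "nonneg_on V (lin_fun a3 c3)" "G2 = {v\<in>V. lin_fun a3 c3 v = 0}"
          using G2 unfolding face_of_config_def by blast
        show "G2 = G"
        proof (cases "G2 \<inter> W = F")
          case True
          then have "G2 \<in> Fam" using G2 by (simp add: Fam_def)
          then show ?thesis using G(2) G2 by blast
        next
          case False
          have "face_of_config W (G2 \<inter> W)"
            unfolding face_of_config_def
            by (rule exI[of _ a3], rule exI[of _ c3]) (use a3 WV in \<open>auto simp: nonneg_on_def\<close>)
          moreover have "F \<subseteq> G2 \<inter> W" using GW G2 by auto
          ultimately have "G2 \<inter> W = W" using facF False unfolding facet_of_config_def by blast
          then have h0W: "\<forall>w\<in>W. lin_fun a3 c3 w = 0" using a3(2) by auto
          define A where "A = V - G2"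
          have A: "finite A" "A \<noteq> {}" using G2 assms(1) faceV_sub by (auto simp: A_def)
          have pos3: "lin_fun a3 c3 v > 0" if "v \<in> A" for v
            using that a3 by (force simp: A_def nonneg_on_def)
          have pos2: "lin_fun a2 c2 v > 0" if "v \<in> A" for v
            using that a2 G2 by (force simp: A_def nonneg_on_def)
          obtain v0 where v0: "v0 \<in> A" "\<forall>a\<in>A. lin_fun a2 c2 v0 / lin_fun a3 c3 v0 \<le> lin_fun a2 c2 a / lin_fun a3 c3 a"
            using min_ratio[OF A, of "lin_fun a2 c2" "lin_fun a3 c3"] by blast
          define s where "s = lin_fun a2 c2 v0 / lin_fun a3 c3 v0"
          define \<phi> where "\<phi> = lin_fun (a2 - s * a3) (c2 - s *\<^sub>R c3)"
          have phi: "\<phi> w = lin_fun a2 c2 w - s * lin_fun a3 c3 w" for w unfolding \<phi>_def by (simp add: lin_comb2)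
          have nn: "nonneg_on V \<phi>"
            unfolding nonneg_on_def
          proof
            fix v assume v: "v \<in> V"
            show "0 \<le> \<phi> v"
            proof (cases "v \<in> G2")
              case True then show ?thesis using a2 a3 v by (auto simp: phi nonneg_on_def)
            next
              case False
              then have vA: "v \<in> A" using v by (simp add: A_def)
              have "s \<le> lin_fun a2 c2 v / lin_fun a3 c3 v" using v0(2) vA s_def by simp
              then have "s * lin_fun a3 c3 v \<le> lin_fun a2 c2 v" using pos3[OF vA] by (simp add: pos_le_divide_eq)
              then show ?thesis by (simp add: phi)
            qed
          qed
          define G3 where "G3 = {v\<in>V. \<phi> v = 0}"
          have "face_of_config V G3" unfolding face_of_config_def G3_def using nn \<phi>_def by blast
          moreover have "G3 \<inter> W = F"
            using h0W GW a2(2) WV by (auto simp: G3_def phi)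
          ultimately have "G3 \<in> Fam" by (simp add: Fam_def)
          moreover have "G \<subseteq> G3" using a2 a3 G2 by (auto simp: G3_def phi)
          ultimately have "G3 = G" using G(2) by blast
          moreover have "v0 \<in> G3" using v0(1) pos3[OF v0(1)] by (auto simp: G3_def phi s_def A_def)
          moreover have "v0 \<notin> G" using v0(1) G2 by (auto simp: A_def)
          ultimately show ?thesis by blast
        qed
      qed
      have "facet_defining V a2 c2" unfolding facet_defining_def using a2 facG by simp
      then have cardV: "card (lin_fun a2 c2 ` V) \<le> levelness V" using LV unfolding k_level_def by blast
      have nn2: "nonneg_on W (lin_fun a2 c2)" using a2(1) WV by (auto simp: nonneg_on_def)
      have z2: "{w\<in>W. lin_fun a2 c2 w = 0} = F" using GW a2(2) WV by auto
      obtain s where s: "s > 0" "\<forall>w\<in>W. lin_fun a2 c2 w = s * lin_fun \<delta>' c' w"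
        using scaling[OF finW nnW nn2 F_def[symmetric] z2 facF] by blast
      have "lin_fun \<delta>' c' ` W = (\<lambda>y. y / s) ` (lin_fun a2 c2 ` W)"
        using s by (auto simp: image_image intro!: image_cong)
      then have "card (lin_fun \<delta>' c' ` W) \<le> card (lin_fun a2 c2 ` W)"
        using card_image_le[OF finite_imageI[OF finW], of "\<lambda>y. y / s" "lin_fun a2 c2"] by simp
      also have "\<dots> \<le> card (lin_fun a2 c2 ` V)"
        by (rule card_mono) (use assms(1) WV in auto)
      finally show "card (lin_fun \<delta>' c' ` W) \<le> levelness V" using cardV by linarith
    qed
    then show ?thesis unfolding levelness_def[of W] by (rule Least_le)
  qed
  show ?thesis using part1 part2 W_def by auto
qed

end
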